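(* Let $m\in\mathbb{N}$, $c=(c_1,\ldots,c_m)\in\mathbb{N}^m$ with all $c_j\ge 1$, and $\mathcal{X}=\{0,\ldots,c_1\}\times\cdots\times\{0,\ldots,c_m\}$. Let $\mathcal{V}_{\mathrm{mon}}$ be the set of all functions $\hat v:\mathcal{X}\to\mathbb{R}_{\ge 0}$ satisfying (M) monotonicity: for $a,b\in\mathcal{X}$ with $a_k\le b_k$ for all $k\in\{1,\ldots,m\}$, $\hat v(a)\le \hat v(b)$; and (N) normalization: $\hat v((0,\ldots,0))=0$. Then $\mathcal{V}_{\mathrm{mon}}$ is exactly the set of all multiset MVNNs $\mathcal{M}^{(W,b)}:\mathcal{X}\to\mathbb{R}_{\ge0}$ (over all choices of depth, layer widths, cutoffs $t^k>0$, entrywise non-negative weights $W$ and entrywise non-positive biases $b$). That is, every function satisfying (M) and (N) can be represented exactly as such a multiset MVNN, and every such multiset MVNN satisfies (M) and (N).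
   Context: A multiset MVNN (mMVNN) is a map $\mathcal{M}^{(W,b)}:\mathcal{X}\to\mathbb{R}_{\ge0}$ of the form $$\mathcal{M}^{(W,b)}(x)= W^{K}\varphi_{0,t^{K-1}}\Big(\cdots\varphi_{0,t^{1}}\big(W^{1}(Dx)+b^{1}\big)\cdots\Big),$$ where $K\in\mathbb{N}$ is the number of hidden layers; $\varphi_{0,t}(z)=\min(t,\max(0,z))$ (applied componentwise) is the bounded ReLU with cutoff $t>0$, with cutoffs $t^k>0$ for $k=1,\ldots,K-1$; $W^k\in\mathbb{R}^{d^k\times d^{k-1}}$ for $k=1,\ldots,K$ are matrices with all entries $\ge 0$, where $d^0=m$ and $d^K=1$; $b^k\in\mathbb{R}^{d^k}$ for $k=1,\ldots,K-1$ are vectors with all entries $\le 0$; and $D=\mathrm{diag}(1/c_1,\ldots,1/c_m)$ is a fixed (non-trainable) normalization matrix. *)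

theory Defs
  imports Main "HOL-Analysis.Analysis"
begin

text \<open>Vectors in R^d are represented as functions nat \<Rightarrow> real (only indices < d matter);
  matrices in R^(d x d') as functions nat \<Rightarrow> nat \<Rightarrow> real (row i, column j).\<close>

definition domX :: "nat \<Rightarrow> (nat \<Rightarrow> nat) \<Rightarrow> (nat \<Rightarrow> nat) set" where
  "domX m c = {x. (\<forall>i<m. x i \<le> c i) \<and> (\<forall>i\<ge>m. x i = 0)}"

definition brelu :: "real \<Rightarrow> real \<Rightarrow> real" where
  "brelu t z = min t (max 0 z)"

text \<open>Hidden layer outputs z^k (k = 0 is the normalized input D x).
  ds = [d^0,...,d^K], Ws = [W^1,...,W^K], bs = [b^1,...,b^(K-1)], ts = [t^1,...,t^(K-1)].\<close>
fun mvnn_hidden :: "nat \<Rightarrow> (nat \<Rightarrow> nat) \<Rightarrow> nat list \<Rightarrow> (nat \<Rightarrow> nat \<Rightarrow> real) list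
      \<Rightarrow> (nat \<Rightarrow> real) list \<Rightarrow> real list \<Rightarrow> (nat \<Rightarrow> nat) \<Rightarrow> nat \<Rightarrow> (nat \<Rightarrow> real)" where
  "mvnn_hidden m c ds Ws bs ts x 0 = (\<lambda>j. real (x j) / real (c j))"
| "mvnn_hidden m c ds Ws bs ts x (Suc k) =
     (\<lambda>i. brelu (ts ! k)
        ((\<Sum>j<ds ! k. (Ws ! k) i j * mvnn_hidden m c ds Ws bs ts x k j) + (bs ! k) i))"

definition mvnn_eval :: "nat \<Rightarrow> (nat \<Rightarrow> nat) \<Rightarrow> nat list \<Rightarrow> (nat \<Rightarrow> nat \<Rightarrow> real) list
      \<Rightarrow> (nat \<Rightarrow> real) list \<Rightarrow> real list \<Rightarrow> (nat \<Rightarrow> nat) \<Rightarrow> real" where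
  "mvnn_eval m c ds Ws bs ts x =
     (let K = length Ws in
      \<Sum>j<ds ! (K - 1). (Ws ! (K - 1)) 0 j * mvnn_hidden m c ds Ws bs ts x (K - 1) j)"

definition valid_mvnn :: "nat \<Rightarrow> nat list \<Rightarrow> (nat \<Rightarrow> nat \<Rightarrow> real) list
      \<Rightarrow> (nat \<Rightarrow> real) list \<Rightarrow> real list \<Rightarrow> bool" where
  "valid_mvnn m ds Ws bs ts \<longleftrightarrow>
     (let K = length Ws in
      K \<ge> 1 \<and> length ds = K + 1 \<and> ds ! 0 = m \<and> ds ! K = 1 \<and>
      length bs = K - 1 \<and> length ts = K - 1 \<and>
      (\<forall>k<K. \<forall>i<ds ! (Suc k). \<forall>j<ds ! k. (Ws ! k) i j \<ge> 0) \<and>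
      (\<forall>k<K - 1. \<forall>i<ds ! (Suc k). (bs ! k) i \<le> 0) \<and>
      (\<forall>k<K - 1. ts ! k > 0))"

definition in_Vmon :: "nat \<Rightarrow> (nat \<Rightarrow> nat) \<Rightarrow> ((nat \<Rightarrow> nat) \<Rightarrow> real) \<Rightarrow> bool" where
  "in_Vmon m c v \<longleftrightarrow>
     (\<forall>x\<in>domX m c. v x \<ge> 0) \<and>
     (\<forall>a\<in>domX m c. \<forall>b\<in>domX m c. (\<forall>k<m. a k \<le> b k) \<longrightarrow> v a \<le> v b) \<and>
     v (\<lambda>_. 0) = 0"

end

theory Submission
  imports Defs
begin

lemma brelu_mono: "z \<le> w \<Longrightarrow> brelu t z \<le> brelu t w"
  unfolding brelu_def by auto

lemma brelu_nonneg: "t \<ge> 0 \<Longrightarrow> brelu t z \<ge> 0"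
  unfolding brelu_def by auto

lemma hidden_mono:
  assumes valid: "valid_mvnn m ds Ws bs ts"
    and xy: "\<forall>k<m. x k \<le> y k"
  shows "k < length Ws \<Longrightarrow> \<forall>i<ds!k. 0 \<le> mvnn_hidden m c ds Ws bs ts x k i
             \<and> mvnn_hidden m c ds Ws bs ts x k i \<le> mvnn_hidden m c ds Ws bs ts y k i"
proof (induction k)
  case 0
  have "ds ! 0 = m" using valid by (simp add: valid_mvnn_def Let_def)
  then show ?case using xy by (auto intro: divide_right_mono)
next
  case (Suc k)
  let ?h = "mvnn_hidden m c ds Ws bs ts"
  have IH: "\<forall>i<ds!k. 0 \<le> ?h x k i \<and> ?h x k i \<le> ?h y k i" using Suc by simp
  have W: "\<forall>i<ds ! (Suc k). \<forall>j<ds ! k. (Ws ! k) i j \<ge> 0"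
    using valid Suc.prems by (simp add: valid_mvnn_def Let_def)
  have t: "ts ! k > 0" using valid Suc.prems by (simp add: valid_mvnn_def Let_def)
  show ?case
  proof (intro allI impI conjI)
    fix i assume i: "i < ds ! Suc k"
    show "0 \<le> ?h x (Suc k) i" using t by (simp add: brelu_nonneg)
    have "(\<Sum>j<ds ! k. (Ws ! k) i j * ?h x k j) \<le> (\<Sum>j<ds ! k. (Ws ! k) i j * ?h y k j)"
      by (rule sum_mono) (use IH W i in \<open>auto intro: mult_left_mono\<close>)
    then show "?h x (Suc k) i \<le> ?h y (Suc k) i"
      by (simp add: brelu_mono)
  qed
qed

lemma hidden_zero:
  assumes valid: "valid_mvnn m ds Ws bs ts"
  shows "k < length Ws \<Longrightarrow> \<forall>i<ds!k. mvnn_hidden m c ds Ws bs ts (\<lambda>_. 0) k i = 0"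
proof (induction k)
  case 0
  then show ?case by simp
next
  case (Suc k)
  have b: "\<forall>i<ds ! (Suc k). (bs ! k) i \<le> 0"
    using valid Suc.prems by (simp add: valid_mvnn_def Let_def)
  have t: "ts ! k > 0" using valid Suc.prems by (simp add: valid_mvnn_def Let_def)
  show ?case using Suc b t by (auto simp: brelu_def)
qed

lemma easy_dir:
  assumes valid: "valid_mvnn m ds Ws bs ts"
    and eq: "\<forall>x\<in>domX m c. v x = mvnn_eval m c ds Ws bs ts x"
  shows "in_Vmon m c v"
proof -
  let ?K = "length Ws"
  have K: "?K \<ge> 1" "ds ! ?K = 1" using valid by (auto simp: valid_mvnn_def Let_def)
  have W: "\<forall>j<ds ! (?K - 1). (Ws ! (?K - 1)) 0 j \<ge> 0"
  proof (intro allI impI)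
    fix j assume j: "j < ds ! (?K - 1)"
    have "\<forall>k<?K. \<forall>i<ds ! (Suc k). \<forall>j<ds ! k. (Ws ! k) i j \<ge> 0"
      using valid by (simp add: valid_mvnn_def Let_def)
    moreover have "?K - 1 < ?K" "Suc (?K - 1) = ?K" using K by auto
    ultimately show "(Ws ! (?K - 1)) 0 j \<ge> 0" using j K by (metis zero_less_one)
  qed
  have z: "(\<lambda>_. 0) \<in> domX m c" by (simp add: domX_def)
  have mono: "mvnn_eval m c ds Ws bs ts x \<le> mvnn_eval m c ds Ws bs ts y \<and> 0 \<le> mvnn_eval m c ds Ws bs ts x"
    if "\<forall>k<m. x k \<le> y k" for x y
  proof -
    have H: "\<forall>i<ds!(?K - 1). 0 \<le> mvnn_hidden m c ds Ws bs ts x (?K - 1) i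
             \<and> mvnn_hidden m c ds Ws bs ts x (?K - 1) i \<le> mvnn_hidden m c ds Ws bs ts y (?K - 1) i"
      using hidden_mono[OF valid that, of "?K - 1"] K by simp
    show ?thesis unfolding mvnn_eval_def Let_def
      using H W by (auto intro!: sum_mono sum_nonneg mult_left_mono)
  qed
  have "mvnn_eval m c ds Ws bs ts (\<lambda>_. 0) = 0"
    using hidden_zero[OF valid, of "?K - 1" c] K unfolding mvnn_eval_def Let_def by simp
  then show ?thesis unfolding in_Vmon_def using eq z mono
    by (metis order_refl)
qed

lemma brelu1_nat: "brelu 1 (real a - real b) = (if b < a then 1 else 0)"
  unfolding brelu_def by auto

lemma hard_dir:
  assumes cpos: "\<forall>j<m. c j \<ge> 1" and V: "in_Vmon m c v"
  shows "\<exists>ds Ws bs ts. valid_mvnn m ds Ws bs ts \<and>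
              (\<forall>x\<in>domX m c. v x = mvnn_eval m c ds Ws bs ts x)"
proof -
  define D where "D = domX m c"
  define M where "M = (\<Sum>i<m. c i)"
  define B where "B = Suc M"
  have cM: "c i \<le> M" if "i < m" for i
    unfolding M_def using that by (intro member_le_sum) auto
  have Dbound: "x i \<le> M \<and> x i < B" if "x \<in> D" "i < m" for x i
  proof -
    have "x i \<le> c i" using that by (simp add: D_def domX_def)
    then show ?thesis using cM[OF that(2)] by (simp add: B_def)
  qed
  have finD: "finite D"
  proof -
    have "D \<subseteq> {f. \<forall>x. (x \<in> {..<m} \<longrightarrow> f x \<in> {..M}) \<and> (x \<notin> {..<m} \<longrightarrow> f x = 0)}"
    proof (rule subsetI)
      fix f assume f: "f \<in> D"
      have a: "f x \<le> M" if "x < m" for x using Dbound[OF f that] by simp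
      have b: "f x = 0" if "\<not> x < m" for x using f that by (simp add: D_def domX_def)
      show "f \<in> {f. \<forall>x. (x \<in> {..<m} \<longrightarrow> f x \<in> {..M}) \<and> (x \<notin> {..<m} \<longrightarrow> f x = 0)}"
        using a b by simp
    qed
    then show ?thesis
      using finite_set_of_finite_funs[of "{..<m}" "{..M}" 0] finite_subset by blast
  qed
  obtain P where P: "set P = D" using finite_list[OF finD] by blast
  define R where "R = sorted_list_of_set (v ` D)"
  have setR: "set R = v ` D" unfolding R_def using finD by simp
  have sR: "sorted_wrt (<) R" unfolding R_def by simp
  have z: "(\<lambda>_. 0) \<in> D" by (simp add: D_def domX_def)
  have vnn: "\<forall>x\<in>D. v x \<ge> 0" and vmono: "\<forall>a\<in>D. \<forall>b\<in>D. (\<forall>k<m. a k \<le> b k) \<longrightarrow> v a \<le> v b"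
    and v0: "v (\<lambda>_. 0) = 0" using V by (auto simp: in_Vmon_def D_def)
  have Rle: "R ! i \<le> R ! j \<longleftrightarrow> i \<le> j" if "i < length R" "j < length R" for i j
    using sorted_wrt_nth_less[OF sR, of i j] sorted_wrt_nth_less[OF sR, of j i] that
    by (metis linorder_not_le nless_le order.asym)
  have R0: "R ! 0 = 0"
  proof -
    have "0 \<in> set R" using setR z v0 by force
    then obtain j where j: "j < length R" "R ! j = 0" by (metis in_set_conv_nth)
    have l0: "0 < length R" using j by linarith
    have "R ! 0 \<le> R ! j" using Rle[OF l0 j(1)] by simp
    then have "R ! 0 \<le> 0" using j by simp
    moreover have "R ! 0 \<ge> 0"
    proof -
      have "R ! 0 \<in> set R" using l0 by simp
      then obtain y where "y \<in> D" "R ! 0 = v y" using setR by auto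
      then show ?thesis using vnn by simp
    qed
    ultimately show ?thesis by simp
  qed
  define W1 :: "nat \<Rightarrow> nat \<Rightarrow> real" where "W1 = (\<lambda>n j. if j = n div B then real (c j) else 0)"
  define b1 :: "nat \<Rightarrow> real" where "b1 = (\<lambda>n. - real (n mod B))"
  define W2 :: "nat \<Rightarrow> nat \<Rightarrow> real" where "W2 = (\<lambda>p n. if Suc (n mod B) = (P!p) (n div B) then 1 else 0)"
  define Sa where "Sa = (\<lambda>a. {n\<in>{..<m*B}. Suc (n mod B) = a (n div B)})"
  define Sx where "Sx = (\<lambda>x a. {n\<in>{..<m*B}. Suc (n mod B) = a (n div B) \<and> n mod B < x (n div B)})"
  define b2 :: "nat \<Rightarrow> real" where "b2 = (\<lambda>p. 1 - real (max 1 (card (Sa (P!p)))))"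
  define W3 :: "nat \<Rightarrow> nat \<Rightarrow> real" where "W3 = (\<lambda>l p. if R!(Suc l) \<le> v (P!p) then 1 else 0)"
  define b3 :: "nat \<Rightarrow> real" where "b3 = (\<lambda>l. 0)"
  define W4 :: "nat \<Rightarrow> nat \<Rightarrow> real" where "W4 = (\<lambda>i l. R!(Suc l) - R!l)"
  define ds where "ds = [m, m*B, length P, length R - 1, 1]"
  define Ws where "Ws = [W1, W2, W3, W4]"
  define bs where "bs = [b1, b2, b3]"
  define ts where "ts = [1, 1, 1::real]"
  let ?h = "mvnn_hidden m c ds Ws bs ts"
  have Bpos: "B > 0" by (simp add: B_def)
  have enc: "(i*B + r) div B = i" "(i*B + r) mod B = r" if "r < B" for i r
    using that Bpos by auto
  have encl: "i*B + r < m*B" if "r < B" "i < m" for i r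
  proof -
    have "i*B + r < (Suc i)*B" using that by simp
    also have "\<dots> \<le> m*B" using that by (intro mult_right_mono) auto
    finally show ?thesis .
  qed
  have divm: "n div B < m" if "n < m*B" for n
    using that by (simp add: less_mult_imp_div_less)
  have h1: "?h x (Suc 0) n = (if n mod B < x (n div B) then 1 else 0)" if x: "x \<in> D" and n: "n < m*B" for x n
  proof -
    have i: "n div B < m" using divm[OF n] .
    have "(\<Sum>j<m. W1 n j * (real (x j) / real (c j))) =
          (\<Sum>j<m. if j = n div B then real (c j) * (real (x j) / real (c j)) else 0)"
      by (rule sum.cong) (auto simp: W1_def)
    also have "\<dots> = real (c (n div B)) * (real (x (n div B)) / real (c (n div B)))"
      using i by simp
    also have "\<dots> = real (x (n div B))" using cpos i by (simp add: Suc_le_eq)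
    finally have s: "(\<Sum>j<m. W1 n j * (real (x j) / real (c j))) = real (x (n div B))" .
    have e: "?h x (Suc 0) n = brelu 1 ((\<Sum>j<m. W1 n j * (real (x j) / real (c j))) + b1 n)"
      by (simp add: ds_def Ws_def bs_def ts_def)
    have "?h x (Suc 0) n = brelu 1 (real (x (n div B)) - real (n mod B))"
      using e unfolding s b1_def by simp
    then show ?thesis by (simp add: brelu1_nat)
  qed
  have SxSa: "Sx x a \<subseteq> Sa a" for x a unfolding Sx_def Sa_def by auto
  have finSa: "finite (Sa a)" for a unfolding Sa_def by auto
  have Sa_ne: "Sa a \<noteq> {} \<longleftrightarrow> (\<exists>i<m. 1 \<le> a i)" if a: "a \<in> D" for a
  proof
    assume "Sa a \<noteq> {}"
    then obtain n where "n \<in> Sa a" by blast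
    then have n: "n < m*B" "Suc (n mod B) = a (n div B)" unfolding Sa_def by auto
    then have "n div B < m" "1 \<le> a (n div B)" using divm by auto
    then show "\<exists>i<m. 1 \<le> a i" by blast
  next
    assume "\<exists>i<m. 1 \<le> a i"
    then obtain i where i: "i < m" "1 \<le> a i" by blast
    have r: "a i - 1 < B" using Dbound[OF a i(1)] by (meson diff_le_self le_less_trans)
    have "i*B + (a i - 1) \<in> Sa a" unfolding Sa_def using enc[OF r] encl[OF r i(1)] i by auto
    then show "Sa a \<noteq> {}" by blast
  qed
  have Sx_eq: "Sx x a = Sa a \<longleftrightarrow> (\<forall>i<m. a i \<le> x i)" if a: "a \<in> D" for a x
  proof
    assume eq: "Sx x a = Sa a"
    show "\<forall>i<m. a i \<le> x i"
    proof (intro allI impI)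
      fix i assume i: "i < m"
      show "a i \<le> x i"
      proof (cases "a i = 0")
        case False
        have r: "a i - 1 < B" using Dbound[OF a i] by (meson diff_le_self le_less_trans)
        have "i*B + (a i - 1) \<in> Sa a" unfolding Sa_def using enc[OF r] encl[OF r i] False by auto
        then have "i*B + (a i - 1) \<in> Sx x a" using eq by simp
        then show ?thesis unfolding Sx_def using enc[OF r] False by auto
      qed simp
    qed
  next
    assume le: "\<forall>i<m. a i \<le> x i"
    show "Sx x a = Sa a"
      unfolding Sx_def Sa_def using le divm by (auto, metis Suc_le_eq le_trans)
  qed
  have sum2: "(\<Sum>n<m*B. W2 p n * ?h x (Suc 0) n) = real (card (Sx x (P!p)))" if x: "x \<in> D" for x p
  proof -
    have "(\<Sum>n<m*B. W2 p n * ?h x (Suc 0) n) = (\<Sum>n<m*B. if n \<in> Sx x (P!p) then 1 else 0)"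
      by (rule sum.cong) (auto simp: h1[OF x] W2_def Sx_def simp del: mvnn_hidden.simps)
    also have "\<dots> = real (card (Sx x (P!p)))"
    proof -
      have "{..<m*B} \<inter> {n. n \<in> Sx x (P!p)} = Sx x (P!p)" unfolding Sx_def by auto
      then show ?thesis by (simp add: sum.If_cases)
    qed
    finally show ?thesis .
  qed
  have h2: "?h x (Suc (Suc 0)) p = (if (\<exists>i<m. 1 \<le> (P!p) i) \<and> (\<forall>i<m. (P!p) i \<le> x i) then 1 else 0)"
    if x: "x \<in> D" and p: "p < length P" for x p
  proof -
    let ?a = "P!p"
    have a: "?a \<in> D" using P p by auto
    have "?h x (Suc (Suc 0)) p = brelu 1 ((\<Sum>n<m*B. W2 p n * ?h x (Suc 0) n) + b2 p)"
      by (simp add: ds_def Ws_def bs_def ts_def numeral_2_eq_2)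
    also have "\<dots> = brelu 1 (real (card (Sx x ?a)) + 1 - real (max 1 (card (Sa ?a))))"
      unfolding sum2[OF x] b2_def by (simp add: algebra_simps)
    finally have e: "?h x (Suc (Suc 0)) p = brelu 1 (real (card (Sx x ?a)) + 1 - real (max 1 (card (Sa ?a))))" .
    have cle: "card (Sx x ?a) \<le> card (Sa ?a)" by (rule card_mono[OF finSa SxSa])
    show ?thesis
    proof (cases "Sa ?a = {}")
      case True
      then have "Sx x ?a = {}" using SxSa by blast
      then have arg: "real (card (Sx x ?a)) + 1 - real (max 1 (card (Sa ?a))) = 0" using True by simp
      have cond: "\<not> (\<exists>i<m. 1 \<le> ?a i)" using True Sa_ne[OF a] by simp
      show ?thesis unfolding e arg using cond by (simp add: brelu_def)
    next
      case False
      then have cpos': "card (Sa ?a) \<ge> 1" using finSa by (simp add: Suc_le_eq card_gt_0_iff)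
      have c1: "\<exists>i<m. 1 \<le> ?a i" using False Sa_ne[OF a] by simp
      show ?thesis
      proof (cases "Sx x ?a = Sa ?a")
        case True
        then have arg: "real (card (Sx x ?a)) + 1 - real (max 1 (card (Sa ?a))) = 1" using cpos' by simp
        have c2: "\<forall>i<m. ?a i \<le> x i" using True Sx_eq[OF a, of x] by simp
        show ?thesis unfolding e arg using c1 c2 by (simp add: brelu_def)
      next
        case F2: False
        then have "card (Sx x ?a) < card (Sa ?a)"
          using SxSa finSa by (meson psubset_card_mono psubsetI)
        then have arg: "real (card (Sx x ?a)) + 1 - real (max 1 (card (Sa ?a))) \<le> 0" using cpos' by simp
        have c2: "\<not> (\<forall>i<m. ?a i \<le> x i)" using F2 Sx_eq[OF a, of x] by simp
        have "brelu 1 (real (card (Sx x ?a)) + 1 - real (max 1 (card (Sa ?a)))) = 0"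
          using arg by (simp add: brelu_def)
        then show ?thesis unfolding e using c2 by simp
      qed
    qed
  qed
  have h3: "?h x (Suc (Suc (Suc 0))) l = (if R!(Suc l) \<le> v x then 1 else 0)"
    if x: "x \<in> D" and l: "l < length R - 1" for x l
  proof -
    let ?T = "\<lambda>p. W3 l p * ?h x (Suc (Suc 0)) p"
    have e: "?h x (Suc (Suc (Suc 0))) l = brelu 1 (\<Sum>p<length P. ?T p)"
      by (subst mvnn_hidden.simps) (simp add: ds_def Ws_def bs_def ts_def b3_def del: mvnn_hidden.simps)
    have rpos: "R!(Suc l) > 0" using sorted_wrt_nth_less[OF sR, of 0 "Suc l"] l R0 by simp
    have Tnn: "?T p \<ge> 0" if "p < length P" for p using h2[OF x that] by (simp add: W3_def del: mvnn_hidden.simps)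
    show ?thesis
    proof (cases "R!(Suc l) \<le> v x")
      case True
      obtain p0 where p0: "p0 < length P" "P!p0 = x" using P x by (metis in_set_conv_nth)
      have "\<exists>i<m. 1 \<le> x i"
      proof (rule ccontr)
        assume "\<not> (\<exists>i<m. 1 \<le> x i)"
        then have "x i = 0" for i using x unfolding D_def domX_def
          by (cases "i < m") auto
        then have "x = (\<lambda>_. 0)" by auto
        then show False using v0 True rpos by simp
      qed
      then have "?T p0 = 1" using h2[OF x p0(1)] p0 True by (simp add: W3_def del: mvnn_hidden.simps)
      then have "1 \<le> (\<Sum>p<length P. ?T p)"
        using member_le_sum[of p0 "{..<length P}" ?T] Tnn p0 by auto
      then show ?thesis unfolding e using True by (simp add: brelu_def)
    next
      case False
      have "?T p = 0" if p: "p < length P" for p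
      proof (rule ccontr)
        assume "?T p \<noteq> 0"
        then have "R!(Suc l) \<le> v (P!p)" "\<forall>i<m. (P!p) i \<le> x i"
          using h2[OF x p] by (auto simp: W3_def split: if_splits simp del: mvnn_hidden.simps)
        moreover have "P!p \<in> D" using P p by auto
        ultimately have "v (P!p) \<le> v x" using vmono x by blast
        then show False using \<open>R!(Suc l) \<le> v (P!p)\<close> False by linarith
      qed
      then have "(\<Sum>p<length P. ?T p) = 0" by (intro sum.neutral) simp
      then show ?thesis unfolding e using False by (simp add: brelu_def)
    qed
  qed
  have ev: "mvnn_eval m c ds Ws bs ts x = v x" if x: "x \<in> D" for x
  proof -
    obtain L where L: "L < length R" "R!L = v x" using setR x by (metis image_eqI in_set_conv_nth)
    have "mvnn_eval m c ds Ws bs ts x = (\<Sum>l<length R - 1. W4 0 l * ?h x (Suc (Suc (Suc 0))) l)"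
      by (simp add: mvnn_eval_def ds_def Ws_def numeral_3_eq_3 del: mvnn_hidden.simps)
    also have "\<dots> = (\<Sum>l<length R - 1. if l < L then R!(Suc l) - R!l else 0)"
    proof (rule sum.cong)
      fix l assume "l \<in> {..<length R - 1}"
      then have "l < length R - 1" by simp
      then show "W4 0 l * ?h x (Suc (Suc (Suc 0))) l = (if l < L then R!(Suc l) - R!l else 0)"
        using h3[OF x] Rle[of "Suc l" L] L by (simp add: W4_def del: mvnn_hidden.simps)
    qed simp
    also have "\<dots> = (\<Sum>l<L. R!(Suc l) - R!l)"
    proof -
      have "{..<L} \<subseteq> {..<length R - 1}" using L by auto
      then have "{..<length R - 1} \<inter> {l. l < L} = {..<L}" by auto
      then show ?thesis by (simp add: sum.If_cases)
    qed
    also have "\<dots> = R!L" using R0 by (simp add: sum_lessThan_telescope)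
    finally show ?thesis using L by simp
  qed
  have W4nn: "W4 0 l \<ge> 0" if "l < length R - 1" for l
    using Rle[of l "Suc l"] that by (simp add: W4_def)
  have len: "length Ws = 4" "length ds = 5" "length bs = 3" "length ts = 3"
    by (simp_all add: ds_def Ws_def bs_def ts_def)
  have w0: "\<forall>i<ds ! (Suc k). \<forall>j<ds ! k. (Ws ! k) i j \<ge> 0" if "k < 4" for k
  proof -
    have "k = 0 \<or> k = 1 \<or> k = 2 \<or> k = 3" using that by linarith
    then show ?thesis
      using W4nn by (elim disjE) (simp_all add: ds_def Ws_def W1_def W2_def W3_def numeral_eq_Suc)
  qed
  have b0: "\<forall>i<ds ! (Suc k). (bs ! k) i \<le> 0" if "k < 3" for k
  proof -
    have "k = 0 \<or> k = 1 \<or> k = 2" using that by linarith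
    then show ?thesis
      by (elim disjE) (simp_all add: bs_def b1_def b2_def b3_def numeral_eq_Suc)
  qed
  have t0: "ts ! k > 0" if "k < 3" for k
  proof -
    have "k = 0 \<or> k = 1 \<or> k = 2" using that by linarith
    then show ?thesis by (elim disjE) (simp_all add: ts_def numeral_eq_Suc)
  qed
  have valid: "valid_mvnn m ds Ws bs ts"
    unfolding valid_mvnn_def Let_def len using w0 b0 t0
    by (simp add: ds_def)
  show ?thesis
  proof (intro exI conjI)
    show "valid_mvnn m ds Ws bs ts" by (rule valid)
    show "\<forall>x\<in>domX m c. v x = mvnn_eval m c ds Ws bs ts x" using ev by (simp add: D_def)
  qed
qed

theorem theorem1:
  fixes m :: nat and c :: "nat \<Rightarrow> nat"
  assumes "\<forall>j<m. c j \<ge> 1"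
  shows "\<forall>v :: (nat \<Rightarrow> nat) \<Rightarrow> real.
           in_Vmon m c v \<longleftrightarrow>
           (\<exists>ds Ws bs ts. valid_mvnn m ds Ws bs ts \<and>
              (\<forall>x\<in>domX m c. v x = mvnn_eval m c ds Ws bs ts x))"
proof (intro allI iffI)
  fix v :: "(nat \<Rightarrow> nat) \<Rightarrow> real"
  assume "in_Vmon m c v"
  then show "\<exists>ds Ws bs ts. valid_mvnn m ds Ws bs ts \<and>
              (\<forall>x\<in>domX m c. v x = mvnn_eval m c ds Ws bs ts x)" by (rule hard_dir[OF assms])
next
  fix v :: "(nat \<Rightarrow> nat) \<Rightarrow> real"
  assume "\<exists>ds Ws bs ts. valid_mvnn m ds Ws bs ts \<and>
              (\<forall>x\<in>domX m c. v x = mvnn_eval m c ds Ws bs ts x)"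
  then obtain ds Ws bs ts where "valid_mvnn m ds Ws bs ts"
    "\<forall>x\<in>domX m c. v x = mvnn_eval m c ds Ws bs ts x" by blast
  then show "in_Vmon m c v" by (rule easy_dir)
qed

end
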